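(* For every integer $k \geq 8$ that is divisible by four, \[ f\left(n,k,\binom{k}{2} - k/2 + 1\right) = \Omega\left(n^{2 - 8/k}\right). \]
   Context: For positive integers $n,k,\ell$, $f(n,k,\ell)$ denotes the minimum number of colors $|C|$ in a coloring $\chi:E\to C$ of the edges of the complete graph $K_n=(V,E)$ such that every set of $k$ vertices of $V$ spans (in the induced complete subgraph $K_k$) edges of at least $\ell$ distinct colors. The parameter $k$ is fixed and the asymptotic notation refers to $n\to\infty$ (implied constants may depend on $k$). *)

theory Defs
  imports "HOL-Analysis.Analysis" "HOL-Library.Landau_Symbols"
begin

definition edges_of :: "nat set \<Rightarrow> nat set set" where
  "edges_of S = {e. e \<subseteq> S \<and> card e = 2}"

definition good_colouring :: "nat \<Rightarrow> nat \<Rightarrow> nat \<Rightarrow> (nat set \<Rightarrow> nat) \<Rightarrow> bool" where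
  "good_colouring n k l col \<longleftrightarrow>
     (\<forall>S. S \<subseteq> {..<n} \<and> card S = k \<longrightarrow> card (col ` edges_of S) \<ge> l)"

definition f :: "nat \<Rightarrow> nat \<Rightarrow> nat \<Rightarrow> nat" where
  "f n k l = (LEAST c. \<exists>col. good_colouring n k l col \<and> card (col ` edges_of {..<n}) = c)"

end

theory Submission
  imports Defs "HOL-Library.Nat_Bijection"
begin

lemma edge_in: "a \<in> S \<Longrightarrow> b \<in> S \<Longrightarrow> a \<noteq> b \<Longrightarrow> {a,b} \<in> edges_of S"
  by (auto simp: edges_of_def)

lemma edges_of_mono: "S \<subseteq> T \<Longrightarrow> edges_of S \<subseteq> edges_of T"
  by (auto simp: edges_of_def)

lemma finite_edges_of: "finite S \<Longrightarrow> finite (edges_of S)"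
  unfolding edges_of_def by (rule finite_subset[of _ "Pow S"]) auto

lemma card_edges_of: "finite S \<Longrightarrow> card (edges_of S) = card S choose 2"
  unfolding edges_of_def by (rule n_subsets)

lemma edge_finite: "e \<in> edges_of S \<Longrightarrow> finite e"
  by (auto simp: edges_of_def intro: card_ge_0_finite)

lemma bad:
  assumes good: "good_colouring n k ((k choose 2) - k div 2 + 1) col"
    and kn: "k \<le> n" and T: "T \<subseteq> {..<n}" "card T \<le> k" and F: "F \<subseteq> edges_of T"
    and cF: "card (col ` F) + k div 2 \<le> card F"
  shows False
proof -
  have fT: "finite T" using T finite_subset by blast
  have "k - card T \<le> card ({..<n} - T)" using T kn by (simp add: card_Diff_subset fT)
  then obtain U where U: "U \<subseteq> {..<n} - T" "card U = k - card T" "finite U"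
    by (rule obtain_subset_with_card_n)
  define T' where "T' = T \<union> U"
  have T'n: "T' \<subseteq> {..<n}" using U T unfolding T'_def by auto
  have cT': "card T' = k" unfolding T'_def using U T fT
    by (subst card_Un_disjoint) auto
  have fT': "finite T'" using T'n finite_subset by blast
  have FT': "F \<subseteq> edges_of T'" using F edges_of_mono[of T T'] unfolding T'_def by auto
  have fE: "finite (edges_of T')" by (rule finite_edges_of[OF fT'])
  have fF: "finite F" using FT' fE finite_subset by blast
  have "((k choose 2) - k div 2 + 1) \<le> card (col ` edges_of T')"
    using good T'n cT' unfolding good_colouring_def by blast
  also have "col ` edges_of T' = col ` F \<union> col ` (edges_of T' - F)" using FT' by blast
  also have "card \<dots> \<le> card (col ` F) + card (col ` (edges_of T' - F))" by (rule card_Un_le)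
  also have "card (col ` (edges_of T' - F)) \<le> card (edges_of T' - F)"
    using fE by (intro card_image_le) auto
  also have "card (edges_of T' - F) = (k choose 2) - card F"
    using card_Diff_subset[OF fF FT'] card_edges_of[OF fT'] cT' by simp
  finally have A: "(k choose 2) - k div 2 + 1 \<le> card (col ` F) + ((k choose 2) - card F)" by simp
  have "card F \<le> k choose 2" using card_mono[OF fE FT'] card_edges_of[OF fT'] cT' by simp
  with A cF show False by linarith
qed

locale setting =
  fixes n k :: nat and col :: "nat set \<Rightarrow> nat"
  assumes k8: "8 \<le> k" and k4: "4 dvd k" and kn: "k \<le> n"
    and good: "good_colouring n k ((k choose 2) - k div 2 + 1) col"
begin

definition cls where "cls v \<gamma> = {w. w < n \<and> w \<noteq> v \<and> col {v,w} = \<gamma>}"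
definition BV where "BV = {v. v < n \<and> (\<exists>\<gamma>. k \<le> card (cls v \<gamma>))}"
definition V' where "V' = {..<n} - BV"

lemma finite_cls: "finite (cls v \<gamma>)"
  unfolding cls_def by (rule finite_subset[of _ "{..<n}"]) auto

lemma bad': "T \<subseteq> {..<n} \<Longrightarrow> card T \<le> k \<Longrightarrow> F \<subseteq> edges_of T
   \<Longrightarrow> card (col ` F) + k div 2 \<le> card F \<Longrightarrow> False"
  using bad[OF good kn] by blast

lemma stars_step:
  assumes BVk: "k \<le> card BV"
    and T: "T \<subseteq> {..<n}" "card T + 4 \<le> k" and F: "F \<subseteq> edges_of T"
  shows "\<exists>T' F'. T' \<subseteq> {..<n} \<and> card T' \<le> card T + 4 \<and> F' \<subseteq> edges_of T'
      \<and> card F' = card F + 3 \<and> card (col ` F') \<le> card (col ` F) + 1"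
proof -
  have fT: "finite T" using T finite_subset by blast
  have fF: "finite F" using F finite_edges_of[OF fT] finite_subset by blast
  have fB: "finite BV" unfolding BV_def by (rule finite_subset[of _ "{..<n}"]) auto
  have "card BV - card T \<le> card (BV - T)" by (rule diff_card_le_card_Diff[OF fT])
  hence "0 < card (BV - T)" using BVk T by linarith
  hence "BV - T \<noteq> {}" by (metis card.empty less_irrefl)
  then obtain v where v: "v \<in> BV" "v \<notin> T" by blast
  then obtain \<gamma> where g: "k \<le> card (cls v \<gamma>)" "v < n" unfolding BV_def by blast
  have "card (cls v \<gamma>) - card T \<le> card (cls v \<gamma> - T)" by (rule diff_card_le_card_Diff[OF fT])
  hence "3 \<le> card (cls v \<gamma> - T)" using g T by linarith
  then obtain Z where Z: "Z \<subseteq> cls v \<gamma> - T" "card Z = 3" "finite Z"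
    by (rule obtain_subset_with_card_n)
  then obtain w1 w2 w3 where w: "Z = {w1,w2,w3}" "w1 \<noteq> w2" "w2 \<noteq> w3" "w1 \<noteq> w3"
    unfolding card_3_iff by blast
  have wc: "w1 \<in> cls v \<gamma>" "w2 \<in> cls v \<gamma>" "w3 \<in> cls v \<gamma>" "w1 \<notin> T" "w2 \<notin> T" "w3 \<notin> T"
    using Z w by auto
  hence wn: "w1 < n" "w2 < n" "w3 < n" "w1 \<noteq> v" "w2 \<noteq> v" "w3 \<noteq> v"
     "col {v,w1} = \<gamma>" "col {v,w2} = \<gamma>" "col {v,w3} = \<gamma>"
    unfolding cls_def by auto
  define G where "G = {{v,w1},{v,w2},{v,w3}}"
  define T' where "T' = T \<union> {v,w1,w2,w3}"
  have GF: "G \<inter> F = {}" using F v(2) unfolding G_def edges_of_def by auto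
  have cG: "card G = 3" unfolding G_def using w wn by (simp add: doubleton_eq_iff)
  have colG: "col ` G = {\<gamma>}" unfolding G_def using wn by auto
  have c1: "card T' \<le> card T + card {v,w1,w2,w3}" unfolding T'_def by (rule card_Un_le)
  have c4: "card {v,w1,w2,w3} \<le> 4" 
    using card_insert_le[of "{w1,w2,w3}" v] card_insert_le[of "{w2,w3}" w1] card_insert_le[of "{w3}" w2]
    by (simp add: card_insert_if split: if_splits)
  have cT': "card T' \<le> card T + 4" using c1 c4 by linarith
  have T'n: "T' \<subseteq> {..<n}" unfolding T'_def using T wn g by auto
  have F'E: "F \<union> G \<subseteq> edges_of T'" unfolding T'_def G_def
    using F edges_of_mono[of T "T \<union> {v,w1,w2,w3}"] wn by (auto intro!: edge_in)
  have cF': "card (F \<union> G) = card F + 3" using GF fF cG by (subst card_Un_disjoint) (auto simp: G_def)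
  have "card (col ` (F \<union> G)) \<le> card (col ` F) + card (col ` G)"
    unfolding image_Un by (rule card_Un_le)
  hence "card (col ` (F \<union> G)) \<le> card (col ` F) + 1" using colG by simp
  thus ?thesis using cT' T'n F'E cF' by (intro exI[of _ T'] exI[of _ "F \<union> G"]) auto
qed

lemma card_BV: "card BV < k"
proof (rule ccontr)
  assume "\<not> card BV < k"
  hence BVk: "k \<le> card BV" by simp
  have "\<forall>j. j \<le> k div 4 \<longrightarrow> (\<exists>T F. T \<subseteq> {..<n} \<and> card T \<le> 4 * j \<and> F \<subseteq> edges_of T
          \<and> card (col ` F) + 2 * j \<le> card F)"
  proof (intro allI impI)
    fix j assume "j \<le> k div 4"
    thus "\<exists>T F. T \<subseteq> {..<n} \<and> card T \<le> 4 * j \<and> F \<subseteq> edges_of T \<and> card (col ` F) + 2 * j \<le> card F"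
    proof (induction j)
      case 0
      show ?case by (intro exI[of _ "{}"]) auto
    next
      case (Suc j)
      then obtain T F where TF: "T \<subseteq> {..<n}" "card T \<le> 4 * j" "F \<subseteq> edges_of T"
          "card (col ` F) + 2 * j \<le> card F" by auto
      have "card T + 4 \<le> k" using TF Suc.prems k4 by (auto elim!: dvdE)
      from stars_step[OF BVk TF(1) this TF(3)] obtain T' F' where
        "T' \<subseteq> {..<n}" "card T' \<le> card T + 4" "F' \<subseteq> edges_of T'"
        "card F' = card F + 3" "card (col ` F') \<le> card (col ` F) + 1" by blast
      thus ?case using TF by (intro exI[of _ T'] exI[of _ F']) auto
    qed
  qed
  then obtain T F where "T \<subseteq> {..<n}" "card T \<le> 4 * (k div 4)" "F \<subseteq> edges_of T"
          "card (col ` F) + 2 * (k div 4) \<le> card F" by blast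
  moreover have "4 * (k div 4) = k" "2 * (k div 4) = k div 2" using k4 by (auto elim!: dvdE)
  ultimately show False using bad'[of T F] by auto
qed

lemma V'_sub: "V' \<subseteq> {..<n}" unfolding V'_def by auto
lemma finite_V': "finite V'" using V'_sub finite_subset by blast
lemma card_V': "n - k \<le> card V'"
proof -
  have "card V' = n - card BV" unfolding V'_def
    by (subst card_Diff_subset) (auto simp: BV_def finite_subset[of _ "{..<n}"])
  thus ?thesis using card_BV by simp
qed
lemma cls_small: "v \<in> V' \<Longrightarrow> card (cls v \<gamma>) < k"
  unfolding V'_def BV_def by (auto simp: not_le)

end

definition pe :: "'a list \<Rightarrow> 'a set set" where
  "pe xs = {{xs!i, xs!Suc i} | i. Suc i < length xs}"

lemma edge_inj:
  assumes "distinct ys" "Suc i < length ys" "Suc j < length ys" "{ys!i, ys!Suc i} = {ys!j, ys!Suc j}"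
  shows "i = j"
proof -
  from assms(4) have "(ys!i = ys!j \<and> ys!Suc i = ys!Suc j) \<or> (ys!i = ys!Suc j \<and> ys!Suc i = ys!j)"
    by (auto simp: doubleton_eq_iff)
  thus ?thesis using assms(1-3) by (auto simp: nth_eq_iff_index_eq)
qed

lemma pe_sub: "e \<in> pe xs \<Longrightarrow> e \<subseteq> set xs"
  unfolding pe_def by auto

lemma pe_image: "pe xs = (\<lambda>i. {xs!i, xs!Suc i}) ` {i. Suc i < length xs}"
  unfolding pe_def by auto

lemma finite_pe: "finite (pe xs)"
  unfolding pe_image by (rule finite_imageI, rule finite_subset[of _ "{..<length xs}"]) auto

lemma card_pe: assumes "distinct xs" shows "card (pe xs) = length xs - 1"
proof -
  have "card (pe xs) = card {i. Suc i < length xs}"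
    unfolding pe_image using edge_inj[OF assms]
    by (intro card_image) (auto simp: inj_on_def)
  also have "{i. Suc i < length xs} = {..<length xs - 1}" by auto
  finally show ?thesis by simp
qed

lemma cycle_lemma:
  assumes dx: "distinct xs" and dy: "distinct ys" and len: "length xs = length ys"
    and ne: "xs \<noteq> ys" and h: "xs ! 0 = ys ! 0" and l: "last xs = last ys" and nn: "xs \<noteq> []"
  shows "card (set xs \<union> set ys) \<le> card (pe xs \<union> pe ys)"
proof -
  define L where "L = length xs"
  have L0: "0 < L" using nn L_def by simp
  have lenY: "length ys = L" using len L_def by simp
  have ny: "ys \<noteq> []" using lenY L0 by auto
  have lastx: "last xs = xs ! (L - 1)" using nn L_def last_conv_nth by blast
  have lasty: "last ys = ys ! (L - 1)" using ny lenY last_conv_nth by blast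
  have estar: "\<exists>i. Suc i < L \<and> ys ! Suc i \<in> set xs \<and> {ys!i, ys!Suc i} \<notin> pe xs"
  proof (rule ccontr)
    assume A: "\<not> ?thesis"
    have B: "\<forall>d. d < L \<longrightarrow> ys ! (L - 1 - d) \<in> set xs"
    proof (intro allI impI)
      fix d assume "d < L" thus "ys ! (L - 1 - d) \<in> set xs"
      proof (induction d)
        case 0 
        have "xs ! (L - 1) \<in> set xs" using L0 L_def by simp
        thus ?case using lastx lasty l by simp
      next
        case (Suc d)
        define i where "i = L - 1 - Suc d"
        have i1: "Suc i = L - 1 - d" "Suc i < L" using Suc.prems unfolding i_def by auto
        hence "ys ! Suc i \<in> set xs" using Suc by auto
        hence "{ys!i, ys!Suc i} \<in> pe xs" using A i1 by blast
        hence "ys ! i \<in> set xs" using pe_sub by blast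
        thus ?case unfolding i_def .
      qed
    qed
    have C: "\<forall>i<L. ys ! i \<in> set xs"
    proof (intro allI impI)
      fix i assume "i < L"
      have "L - 1 - i < L" using \<open>i < L\<close> by auto
      hence "ys ! (L - 1 - (L - 1 - i)) \<in> set xs" using B by blast
      moreover have "L - 1 - (L - 1 - i) = i" using \<open>i < L\<close> by auto
      ultimately show "ys ! i \<in> set xs" by simp
    qed
    have D: "\<forall>i. i < L \<longrightarrow> ys ! i = xs ! i"
    proof (intro allI)
      fix i show "i < L \<longrightarrow> ys ! i = xs ! i"
      proof (induction i rule: less_induct)
        case (less i)
        show ?case
        proof (cases i)
          case 0 thus ?thesis using h by simp
        next
          case (Suc j)
          show ?thesis
          proof
            assume iL: "i < L"
            have IHj: "ys ! j = xs ! j" using less Suc iL by auto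
            have "{ys!j, ys!Suc j} \<in> pe xs" using A C iL Suc by auto
            then obtain q where q: "Suc q < L" "{ys!j, ys!Suc j} = {xs!q, xs!Suc q}"
              unfolding pe_def L_def by blast
            hence "(ys!j = xs!q \<and> ys!Suc j = xs!Suc q) \<or> (ys!j = xs!Suc q \<and> ys!Suc j = xs!q)"
              by (auto simp: doubleton_eq_iff)
            thus "ys ! i = xs ! i"
            proof
              assume a: "ys!j = xs!q \<and> ys!Suc j = xs!Suc q"
              hence "xs ! j = xs ! q" using IHj by simp
              hence "j = q" using dx q iL Suc by (simp add: nth_eq_iff_index_eq L_def)
              thus ?thesis using a Suc by simp
            next
              assume a: "ys!j = xs!Suc q \<and> ys!Suc j = xs!q"
              hence "xs ! j = xs ! Suc q" using IHj by simp
              hence jq: "j = Suc q" using dx q iL Suc by (simp add: nth_eq_iff_index_eq L_def)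
              hence "ys ! q = xs ! q" using less Suc iL by auto
              hence "ys ! Suc j = ys ! q" using a by simp
              hence "Suc j = q" using dy q iL Suc lenY by (simp add: nth_eq_iff_index_eq)
              with jq show ?thesis by simp
            qed
          qed
        qed
      qed
    qed
    hence "xs = ys" using lenY by (intro nth_equalityI) (auto simp: L_def)
    with ne show False by simp
  qed
  then obtain i0 where i0: "Suc i0 < L" "ys ! Suc i0 \<in> set xs" "{ys!i0, ys!Suc i0} \<notin> pe xs" by blast
  define I where "I = {i. Suc i < L \<and> ys ! Suc i \<notin> set xs}"
  define E2 where "E2 = (\<lambda>i. {ys!i, ys!Suc i}) ` I"
  define e where "e = {ys!i0, ys!Suc i0}"
  have cpe: "card (pe xs) = L - 1" using card_pe[OF dx] L_def by simp
  have fI: "finite I" unfolding I_def by (rule finite_subset[of _ "{..<L}"]) auto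
  have cE2: "card E2 = card I" unfolding E2_def
    using edge_inj[OF dy] lenY by (intro card_image) (auto simp: inj_on_def I_def)
  have imI: "set ys - set xs = (\<lambda>i. ys ! Suc i) ` I"
  proof
    show "set ys - set xs \<subseteq> (\<lambda>i. ys ! Suc i) ` I"
    proof
      fix v assume v: "v \<in> set ys - set xs"
      then obtain j where j: "j < L" "ys ! j = v" using lenY by (auto simp: in_set_conv_nth)
      have "j \<noteq> 0" using v j h L0 L_def by (metis Diff_iff nth_mem)
      then obtain i where "j = Suc i" using not0_implies_Suc by blast
      thus "v \<in> (\<lambda>i. ys ! Suc i) ` I" using j v unfolding I_def by auto
    qed
  next
    show "(\<lambda>i. ys ! Suc i) ` I \<subseteq> set ys - set xs" unfolding I_def using lenY by auto
  qed
  have cI: "card (set ys - set xs) = card I" unfolding imI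
    using dy lenY by (intro card_image) (auto simp: inj_on_def I_def nth_eq_iff_index_eq)
  have disj: "pe xs \<inter> E2 = {}" unfolding E2_def I_def using pe_sub by blast
  have eE2: "e \<notin> E2"
  proof
    assume "e \<in> E2"
    then obtain i where i: "i \<in> I" "{ys!i0, ys!Suc i0} = {ys!i, ys!Suc i}" unfolding E2_def e_def by blast
    hence "i0 = i" using edge_inj[OF dy] i0 lenY unfolding I_def by auto
    thus False using i i0 unfolding I_def by auto
  qed
  have ePe: "e \<notin> pe xs" using i0 e_def by simp
  have sub: "insert e (pe xs \<union> E2) \<subseteq> pe xs \<union> pe ys"
    unfolding E2_def e_def pe_def I_def using i0 lenY by auto
  have "card (set xs \<union> set ys) = card (set xs) + card (set ys - set xs)"
    by (metis Un_Diff_cancel card_Un_disjoint Diff_disjoint finite_set finite_Diff inf_commute)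
  also have "\<dots> = L + card I" using cI dx L_def by (simp add: distinct_card)
  also have "\<dots> = card (insert e (pe xs \<union> E2))"
    using cpe cE2 disj eE2 ePe fI L0 finite_pe[of xs] unfolding E2_def
    by (subst card_insert_disjoint) (auto simp: card_Un_disjoint)
  also have "\<dots> \<le> card (pe xs \<union> pe ys)"
    by (rule card_mono[OF _ sub]) (simp add: finite_pe)
  finally show ?thesis .
qed

lemma pe_edges: "distinct xs \<Longrightarrow> pe xs \<subseteq> edges_of (set xs)"
  unfolding pe_def edges_of_def by (auto simp: nth_eq_iff_index_eq)

lemma two_common:
  assumes "distinct xs" "distinct ys" "length xs = Suc g" "length ys = Suc g" "1 \<le> g"
    "xs ! 0 = ys ! 0" "last xs = last ys"
  shows "card (set xs \<union> set ys) \<le> 2 * g"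
proof -
  have nx: "xs \<noteq> []" "ys \<noteq> []" using assms by auto
  have lx: "last xs = xs ! g" "last ys = ys ! g" using nx assms(3,4) by (auto simp: last_conv_nth)
  have "xs ! 0 \<noteq> xs ! g" using assms(1,3,5) by (simp add: nth_eq_iff_index_eq)
  moreover have "xs ! 0 \<in> set xs \<inter> set ys" "xs ! g \<in> set xs \<inter> set ys"
  proof -
    have "xs ! 0 \<in> set xs" "xs ! g \<in> set xs" "ys ! 0 \<in> set ys" "ys ! g \<in> set ys"
      using assms(3,4) by (auto intro!: nth_mem)
    moreover have "ys ! 0 = xs ! 0" "ys ! g = xs ! g" using assms(6,7) lx by simp_all
    ultimately show "xs ! 0 \<in> set xs \<inter> set ys" "xs ! g \<in> set xs \<inter> set ys" by simp_all
  qed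
  ultimately have "2 \<le> card (set xs \<inter> set ys)"
  proof -
    assume a: "xs ! 0 \<noteq> xs ! g" "xs ! 0 \<in> set xs \<inter> set ys" "xs ! g \<in> set xs \<inter> set ys"
    have "card {xs ! 0, xs ! g} = 2" using a(1) by simp
    moreover have "card {xs ! 0, xs ! g} \<le> card (set xs \<inter> set ys)"
      using a(2,3) by (intro card_mono) auto
    ultimately show ?thesis by simp
  qed
  moreover have "card (set xs \<union> set ys) + card (set xs \<inter> set ys) = card (set xs) + card (set ys)"
    using card_Un_Int[of "set xs" "set ys"] by simp
  moreover have "card (set xs) = Suc g" "card (set ys) = Suc g" using assms by (auto simp: distinct_card)
  ultimately show ?thesis by linarith
qed

context setting begin

definition adj :: "nat \<times> nat \<Rightarrow> nat \<times> nat \<Rightarrow> bool" where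
  "adj p q \<longleftrightarrow> fst p \<noteq> fst q \<and> snd p \<noteq> snd q \<and> col {fst p, fst q} = col {snd p, snd q}"

lemma adj_sym: "adj p q \<Longrightarrow> adj q p"
  unfolding adj_def by (auto simp: insert_commute)

lemma adj_irrefl: "\<not> adj p p"
  unfolding adj_def by auto

end

locale core = setting +
  fixes V1 V2 W r m
  assumes V1: "V1 \<subseteq> V'" and V2: "V2 \<subseteq> V'" and V12: "V1 \<inter> V2 = {}"
    and W: "W \<subseteq> V1 \<times> V2" and r: "r \<in> W"
    and mindeg: "\<forall>p\<in>W. m + k*k < card {q\<in>W. adj p q}"
    and big: "card W < m ^ (k div 4)"
begin

lemma finV1: "finite V1" using V1 finite_V' finite_subset by blast
lemma finV2: "finite V2" using V2 finite_V' finite_subset by blast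
lemma finW: "finite W" using W finV1 finV2 finite_subset by blast

lemma loc1: assumes p: "p \<in> W" shows "card {q\<in>W. adj p q \<and> fst q = x} \<le> k"
proof -
  have "{q\<in>W. adj p q \<and> fst q = x} \<subseteq> (\<lambda>d. (x,d)) ` cls (snd p) (col {fst p, x})"
  proof
    fix q assume q: "q \<in> {q\<in>W. adj p q \<and> fst q = x}"
    hence "snd q \<in> V2" using W by auto
    hence "snd q < n" using V2 V'_sub by auto
    hence "snd q \<in> cls (snd p) (col {fst p, x})" using q unfolding cls_def adj_def by auto
    thus "q \<in> (\<lambda>d. (x,d)) ` cls (snd p) (col {fst p, x})" using q by (auto intro: image_eqI[of _ _ "snd q"])
  qed
  hence "card {q\<in>W. adj p q \<and> fst q = x} \<le> card ((\<lambda>d. (x,d)) ` cls (snd p) (col {fst p, x}))"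
    by (intro card_mono finite_imageI finite_cls)
  also have "\<dots> \<le> card (cls (snd p) (col {fst p, x}))" by (rule card_image_le[OF finite_cls])
  also have "\<dots> < k"
  proof -
    have "p \<in> V1 \<times> V2" using p W by blast
    hence "snd p \<in> V2" by (simp add: mem_Times_iff)
    hence "snd p \<in> V'" using V2 by blast
    thus ?thesis by (rule cls_small)
  qed
  finally show ?thesis by simp
qed

lemma loc2: assumes p: "p \<in> W" shows "card {q\<in>W. adj p q \<and> snd q = y} \<le> k"
proof -
  have "{q\<in>W. adj p q \<and> snd q = y} \<subseteq> (\<lambda>c. (c,y)) ` cls (fst p) (col {snd p, y})"
  proof
    fix q assume q: "q \<in> {q\<in>W. adj p q \<and> snd q = y}"
    hence "fst q \<in> V1" using W by auto
    hence "fst q < n" using V1 V'_sub by auto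
    hence "fst q \<in> cls (fst p) (col {snd p, y})" using q unfolding cls_def adj_def by auto
    thus "q \<in> (\<lambda>c. (c,y)) ` cls (fst p) (col {snd p, y})" using q by (auto intro: image_eqI[of _ _ "fst q"])
  qed
  hence "card {q\<in>W. adj p q \<and> snd q = y} \<le> card ((\<lambda>c. (c,y)) ` cls (fst p) (col {snd p, y}))"
    by (intro card_mono finite_imageI finite_cls)
  also have "\<dots> \<le> card (cls (fst p) (col {snd p, y}))" by (rule card_image_le[OF finite_cls])
  also have "\<dots> < k"
  proof -
    have "p \<in> V1 \<times> V2" using p W by blast
    hence "fst p \<in> V1" by (simp add: mem_Times_iff)
    hence "fst p \<in> V'" using V1 by blast
    thus ?thesis by (rule cls_small)
  qed
  finally show ?thesis by simp
qed

lemma avail: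
  assumes p: "p \<in> W" and U: "finite U" "finite U'" "card U + card U' \<le> k"
  shows "m < card {q\<in>W. adj p q \<and> fst q \<notin> U \<and> snd q \<notin> U'}"
proof -
  let ?A = "{q\<in>W. adj p q \<and> fst q \<notin> U \<and> snd q \<notin> U'}"
  let ?B = "\<Union>x\<in>U. {q\<in>W. adj p q \<and> fst q = x}"
  let ?C = "\<Union>y\<in>U'. {q\<in>W. adj p q \<and> snd q = y}"
  have "{q\<in>W. adj p q} \<subseteq> ?A \<union> ?B \<union> ?C" by auto
  moreover have "finite (?A \<union> ?B \<union> ?C)" by (rule finite_subset[OF _ finW]) auto
  ultimately have "card {q\<in>W. adj p q} \<le> card (?A \<union> ?B \<union> ?C)"
    by (intro card_mono) auto
  also have "\<dots> \<le> card ?A + card ?B + card ?C" by (meson card_Un_le add_le_mono1 order_trans)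
  also have "card ?B \<le> (\<Sum>x\<in>U. card {q\<in>W. adj p q \<and> fst q = x})" by (rule card_UN_le[OF U(1)])
  also have "\<dots> \<le> (\<Sum>x\<in>U. k)" by (intro sum_mono loc1[OF p])
  also have "card ?C \<le> (\<Sum>y\<in>U'. card {q\<in>W. adj p q \<and> snd q = y})" by (rule card_UN_le[OF U(2)])
  also have "\<dots> \<le> (\<Sum>y\<in>U'. k)" by (intro sum_mono loc2[OF p])
  finally have "card {q\<in>W. adj p q} \<le> card ?A + k * (card U + card U')" by (simp add: algebra_simps)
  also have "k * (card U + card U') \<le> k * k" using U by simp
  finally show ?thesis using mindeg p by auto
qed

definition paths where
  "paths j = {P. length P = Suc j \<and> last P = r \<and> set P \<subseteq> W \<and> successively adj P
     \<and> distinct (map fst P) \<and> distinct (map snd P)}"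

lemma finite_paths: "finite (paths j)"
  by (rule finite_subset[OF _ finite_lists_length_eq[OF finW, of "Suc j"]]) (auto simp: paths_def)

lemma card_paths: "j \<le> k div 4 \<Longrightarrow> m ^ j \<le> card (paths j)"
proof (induction j)
  case 0
  have "{[r]} \<subseteq> paths 0" using r by (auto simp: paths_def)
  hence "card {[r]} \<le> card (paths 0)" by (intro card_mono finite_paths)
  thus ?case by simp
next
  case (Suc j)
  define Ext where "Ext P = {q\<in>W. adj (hd P) q \<and> fst q \<notin> set (map fst P) \<and> snd q \<notin> set (map snd P)}" for P
  have ext: "m \<le> card (Ext P)" if P: "P \<in> paths j" for P
  proof -
    have ne: "P \<noteq> []" using P by (auto simp: paths_def)
    have "hd P \<in> W" using P ne by (auto simp: paths_def)
    moreover have "card (set (map fst P)) + card (set (map snd P)) = 2 * Suc j"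
    proof -
      have d: "distinct (map fst P)" "distinct (map snd P)" "length P = Suc j" using P by (auto simp: paths_def)
      show ?thesis using distinct_card[OF d(1)] distinct_card[OF d(2)] d(3) by simp
    qed
    moreover have "2 * Suc j \<le> k"
    proof -
      define t where "t = k div 4"
      have "4 * t \<le> k" unfolding t_def by simp
      thus ?thesis using Suc.prems unfolding t_def[symmetric] by simp
    qed
    ultimately show ?thesis unfolding Ext_def using avail[of "hd P" "set (map fst P)" "set (map snd P)"]
      by simp
  qed
  have finE: "finite (Ext P)" for P unfolding Ext_def using finW by auto
  have inj: "inj_on (\<lambda>(P,q). q # P) (Sigma (paths j) Ext)" by (auto simp: inj_on_def)
  have im: "(\<lambda>(P,q). q # P) ` (Sigma (paths j) Ext) \<subseteq> paths (Suc j)"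
  proof
    fix z assume "z \<in> (\<lambda>(P,q). q # P) ` (Sigma (paths j) Ext)"
    then obtain P q where Pq: "P \<in> paths j" "q \<in> Ext P" "z = q # P" by auto
    have ne: "P \<noteq> []" using Pq by (auto simp: paths_def)
    have "adj q (hd P)" using Pq adj_sym unfolding Ext_def by auto
    thus "z \<in> paths (Suc j)" using Pq ne unfolding paths_def Ext_def
      by (auto simp: successively_Cons)
  qed
  have "m ^ Suc j = m * m ^ j" by simp
  also have "\<dots> \<le> m * card (paths j)" using Suc by simp
  also have "\<dots> = (\<Sum>P\<in>paths j. m)" by simp
  also have "\<dots> \<le> (\<Sum>P\<in>paths j. card (Ext P))" by (intro sum_mono ext)
  also have "\<dots> = card (Sigma (paths j) Ext)" using finite_paths finE by simp
  also have "\<dots> = card ((\<lambda>(P,q). q # P) ` (Sigma (paths j) Ext))" by (rule card_image[OF inj, symmetric])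
  also have "\<dots> \<le> card (paths (Suc j))" by (intro card_mono[OF finite_paths im])
  finally show ?case .
qed

lemma collision: "\<exists>P Q. P \<in> paths (k div 4) \<and> Q \<in> paths (k div 4) \<and> P \<noteq> Q \<and> hd P = hd Q"
proof (rule ccontr)
  assume "\<not> ?thesis"
  hence inj: "inj_on hd (paths (k div 4))" by (auto simp: inj_on_def)
  have "hd ` paths (k div 4) \<subseteq> W"
    by (auto simp: paths_def) (metis hd_in_set list.size(3) nat.distinct(1) subsetD)
  hence "card (hd ` paths (k div 4)) \<le> card W" by (intro card_mono finW)
  hence "card (paths (k div 4)) \<le> card W" using card_image[OF inj] by simp
  with card_paths[of "k div 4"] big show False by simp
qed

end

context core begin

lemma pe_map: "pe (map h P) = (\<lambda>i. {h (P!i), h (P!Suc i)}) ` {i. Suc i < length P}"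
  unfolding pe_image by simp

lemma colpe: assumes P: "P \<in> paths j" shows "col ` pe (map fst P) = col ` pe (map snd P)"
proof -
  have s: "successively adj P" using P by (simp add: paths_def)
  have "col ` pe (map fst P) = (\<lambda>i. col {fst (P!i), fst (P!Suc i)}) ` {i. Suc i < length P}"
    by (simp add: pe_map image_image)
  also have "\<dots> = (\<lambda>i. col {snd (P!i), snd (P!Suc i)}) ` {i. Suc i < length P}"
    using s unfolding successively_conv_nth adj_def by (intro image_cong) auto
  also have "\<dots> = col ` pe (map snd P)" by (simp add: pe_map image_image)
  finally show ?thesis .
qed

definition Inv where
  "Inv Va Vb Ea Eb \<longleftrightarrow> finite Va \<and> finite Vb \<and> Va \<subseteq> V1 \<and> Vb \<subseteq> V2 \<and> fst r \<in> Va \<and> snd r \<in> Vb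
     \<and> Ea \<subseteq> edges_of Va \<and> Eb \<subseteq> edges_of Vb \<and> col ` Ea = col ` Eb
     \<and> (card Va + card Vb \<le> 2 * card Ea \<or> card Va + card Vb \<le> 2 * card Eb)"

lemma ext1:
  assumes I: "Inv Va Vb Ea Eb" and s: "card Va + card Vb + 2 \<le> k"
  shows "\<exists>Va' Vb' Ea' Eb'. Inv Va' Vb' Ea' Eb' \<and> card Va' + card Vb' = card Va + card Vb + 2"
proof -
  have fin: "finite Va" "finite Vb" using I by (auto simp: Inv_def)
  have "m < card {q\<in>W. adj r q \<and> fst q \<notin> Va \<and> snd q \<notin> Vb}"
    using s by (intro avail[OF r fin]) auto
  hence "{q\<in>W. adj r q \<and> fst q \<notin> Va \<and> snd q \<notin> Vb} \<noteq> {}" by (metis card.empty not_less0)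
  then obtain q where q: "q \<in> W" "adj r q" "fst q \<notin> Va" "snd q \<notin> Vb" by blast
  have qV: "fst q \<in> V1" "snd q \<in> V2" using q W by (auto simp: mem_Times_iff)
  define ea where "ea = {fst r, fst q}"
  define eb where "eb = {snd r, snd q}"
  have Ea: "Ea \<subseteq> edges_of Va" "Eb \<subseteq> edges_of Vb" using I by (auto simp: Inv_def)
  have fE: "finite Ea" "finite Eb" using Ea finite_edges_of fin finite_subset by blast+
  have eaE: "ea \<notin> Ea" using Ea q unfolding ea_def edges_of_def by auto
  have ebE: "eb \<notin> Eb" using Ea q unfolding eb_def edges_of_def by auto
  have rV: "fst r \<in> Va" "snd r \<in> Vb" using I by (auto simp: Inv_def)
  have ce: "col ea = col eb" using q unfolding adj_def ea_def eb_def by auto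
  have I2: "Inv (insert (fst q) Va) (insert (snd q) Vb) (insert ea Ea) (insert eb Eb)"
    unfolding Inv_def
  proof (intro conjI)
    show "insert ea Ea \<subseteq> edges_of (insert (fst q) Va)"
      using Ea edges_of_mono[of Va "insert (fst q) Va"] rV q unfolding ea_def adj_def
      by (auto intro!: edge_in)
    show "insert eb Eb \<subseteq> edges_of (insert (snd q) Vb)"
      using Ea edges_of_mono[of Vb "insert (snd q) Vb"] rV q unfolding eb_def adj_def
      by (auto intro!: edge_in)
    show "col ` insert ea Ea = col ` insert eb Eb" using I ce by (auto simp: Inv_def)
    show "card (insert (fst q) Va) + card (insert (snd q) Vb) \<le> 2 * card (insert ea Ea) \<or>
          card (insert (fst q) Va) + card (insert (snd q) Vb) \<le> 2 * card (insert eb Eb)"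
      using I fin fE eaE ebE q by (auto simp: Inv_def)
  qed (use I qV fin in \<open>auto simp: Inv_def\<close>)
  moreover have "card (insert (fst q) Va) + card (insert (snd q) Vb) = card Va + card Vb + 2"
    using fin q by simp
  ultimately show ?thesis by blast
qed

lemma extN:
  "Inv Va Vb Ea Eb \<Longrightarrow> card Va + card Vb + 2 * t \<le> k \<Longrightarrow>
   \<exists>Va' Vb' Ea' Eb'. Inv Va' Vb' Ea' Eb' \<and> card Va' + card Vb' = card Va + card Vb + 2 * t"
proof (induction t)
  case 0 thus ?case by auto
next
  case (Suc t)
  then obtain Va' Vb' Ea' Eb' where A: "Inv Va' Vb' Ea' Eb'" "card Va' + card Vb' = card Va + card Vb + 2 * t"
    by auto
  have "card Va' + card Vb' + 2 \<le> k" using A Suc.prems by simp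
  from ext1[OF A(1) this] show ?case using A by auto
qed

lemma final: assumes I: "Inv Va Vb Ea Eb" and s: "card Va + card Vb \<le> k" shows False
proof -
  define t where "t = (k - (card Va + card Vb)) div 2"
  have "card Va + card Vb + 2 * t \<le> k" unfolding t_def using s by simp
  from extN[OF I this] obtain Xa Xb Fa Fb where
    J: "Inv Xa Xb Fa Fb" "card Xa + card Xb = card Va + card Vb + 2 * t" by blast
  have even: "even k" using k4 by (auto elim!: dvdE)
  have s1: "k \<le> card Xa + card Xb + 1" "card Xa + card Xb \<le> k" using J(2) s unfolding t_def by auto
  have fin: "finite Xa" "finite Xb" "Xa \<subseteq> V1" "Xb \<subseteq> V2" using J by (auto simp: Inv_def)
  have FE: "Fa \<subseteq> edges_of Xa" "Fb \<subseteq> edges_of Xb" "col ` Fa = col ` Fb" using J by (auto simp: Inv_def)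
  have fF: "finite Fa" "finite Fb" using FE finite_edges_of fin finite_subset by blast+
  have dX: "Xa \<inter> Xb = {}" using fin V12 by auto
  have dF: "Fa \<inter> Fb = {}"
  proof (rule ccontr)
    assume "Fa \<inter> Fb \<noteq> {}"
    then obtain e where "e \<in> Fa" "e \<in> Fb" by blast
    hence "e \<subseteq> Xa" "e \<subseteq> Xb" "card e = 2" using FE by (auto simp: edges_of_def)
    hence "e = {}" using dX by auto
    with \<open>card e = 2\<close> show False by simp
  qed
  define T where "T = Xa \<union> Xb"
  define F where "F = Fa \<union> Fb"
  have Tn: "T \<subseteq> {..<n}" unfolding T_def using fin V1 V2 V'_sub by auto
  have cT: "card T = card Xa + card Xb" unfolding T_def using fin dX by (simp add: card_Un_disjoint)
  have FT: "F \<subseteq> edges_of T" unfolding F_def T_def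
    using FE edges_of_mono[of Xa "Xa \<union> Xb"] edges_of_mono[of Xb "Xa \<union> Xb"] by auto
  have cF: "card F = card Fa + card Fb" unfolding F_def using fF dF by (simp add: card_Un_disjoint)
  have colF: "col ` F = col ` Fa" unfolding F_def using FE by auto
  have ca: "card (col ` Fa) \<le> card Fa" "card (col ` Fa) \<le> card Fb"
    using card_image_le[OF fF(1), of col] card_image_le[OF fF(2), of col] FE(3) by auto
  have "k div 2 + card (col ` F) \<le> card F"
  proof (cases "card Xa + card Xb \<le> 2 * card Fa")
    case True
    hence "k \<le> 2 * card Fa + 1" using s1 by simp
    hence "k \<le> 2 * card Fa" using even by presburger
    thus ?thesis using cF colF ca by simp
  next
    case False
    hence "card Xa + card Xb \<le> 2 * card Fb" using J by (auto simp: Inv_def)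
    hence "k \<le> 2 * card Fb + 1" using s1 by simp
    hence "k \<le> 2 * card Fb" using even by presburger
    thus ?thesis using cF colF ca by simp
  qed
  thus False using bad'[OF Tn _ FT] cT s1 by simp
qed

theorem core_false: False
proof -
  define g where "g = k div 4"
  have g1: "1 \<le> g" using k8 unfolding g_def by simp
  have g4: "4 * g = k" using k4 unfolding g_def by (auto elim!: dvdE)
  obtain P Q where PQ: "P \<in> paths g" "Q \<in> paths g" "P \<noteq> Q" "hd P = hd Q"
    using collision unfolding g_def by blast
  define aP where "aP = map fst P"
  define aQ where "aQ = map fst Q"
  define bP where "bP = map snd P"
  define bQ where "bQ = map snd Q"
  have Pp: "length P = Suc g" "last P = r" "set P \<subseteq> W" "distinct aP" "distinct bP"
    using PQ(1) unfolding paths_def aP_def bP_def by auto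
  have Qp: "length Q = Suc g" "last Q = r" "set Q \<subseteq> W" "distinct aQ" "distinct bQ"
    using PQ(2) unfolding paths_def aQ_def bQ_def by auto
  have ne: "P \<noteq> []" "Q \<noteq> []" using Pp Qp by auto
  have h0: "P ! 0 = Q ! 0" using PQ(4) ne by (simp add: hd_conv_nth)
  have len: "length aP = Suc g" "length aQ = Suc g" "length bP = Suc g" "length bQ = Suc g"
    using Pp Qp unfolding aP_def aQ_def bP_def bQ_def by auto
  have heads: "aP ! 0 = aQ ! 0" "bP ! 0 = bQ ! 0"
    using h0 ne unfolding aP_def aQ_def bP_def bQ_def by (auto simp: nth_map)
  have lasts: "last aP = fst r" "last aQ = fst r" "last bP = snd r" "last bQ = snd r"
    using Pp Qp ne unfolding aP_def aQ_def bP_def bQ_def by (auto simp: last_map)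
  have nne: "aP \<noteq> []" "bP \<noteq> []" using len by auto
  have PW: "set P \<subseteq> V1 \<times> V2" "set Q \<subseteq> V1 \<times> V2" using Pp Qp W by auto
  define Va where "Va = set aP \<union> set aQ"
  define Vb where "Vb = set bP \<union> set bQ"
  define Ea where "Ea = pe aP \<union> pe aQ"
  define Eb where "Eb = pe bP \<union> pe bQ"
  have cVa: "card Va \<le> 2 * g" unfolding Va_def
    using two_common[of aP aQ g] Pp Qp len g1 heads lasts by simp
  have cVb: "card Vb \<le> 2 * g" unfolding Vb_def
    using two_common[of bP bQ g] Pp Qp len g1 heads lasts by simp
  have sa: "card (set aP) = Suc g" "card (set aQ) = Suc g" "card (set bP) = Suc g" "card (set bQ) = Suc g"
    using len Pp Qp by (simp_all add: distinct_card)
  have ineq: "card Va + card Vb \<le> 2 * card Ea \<or> card Va + card Vb \<le> 2 * card Eb"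
  proof -
    have diff: "aP \<noteq> aQ \<or> bP \<noteq> bQ"
    proof (rule ccontr)
      assume "\<not> (aP \<noteq> aQ \<or> bP \<noteq> bQ)"
      hence "zip aP bP = zip aQ bQ" by simp
      hence "P = Q" unfolding aP_def bP_def aQ_def bQ_def zip_map_fst_snd .
      with PQ(3) show False by simp
    qed
    have cyA: "aP \<noteq> aQ \<Longrightarrow> card Va \<le> card Ea" unfolding Va_def Ea_def
      by (rule cycle_lemma) (use Pp Qp len heads lasts nne in auto)
    have cyB: "bP \<noteq> bQ \<Longrightarrow> card Vb \<le> card Eb" unfolding Vb_def Eb_def
      by (rule cycle_lemma) (use Pp Qp len heads lasts nne in auto)
    have fVa: "finite Va" "finite Vb" unfolding Va_def Vb_def by auto
    have "card (set aP) \<le> card Va" "card (set bP) \<le> card Vb" unfolding Va_def Vb_def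
      by (auto intro: card_mono)
    show ?thesis
    proof (cases "aP = aQ")
      case True
      hence "bP \<noteq> bQ" using diff by simp
      hence "card Vb \<le> card Eb" by (rule cyB)
      moreover have "card Va = Suc g" unfolding Va_def using True sa by simp
      ultimately show ?thesis using \<open>card (set bP) \<le> card Vb\<close> sa by simp
    next
      case False
      hence A: "card Va \<le> card Ea" by (rule cyA)
      show ?thesis
      proof (cases "bP = bQ")
        case True
        hence "card Vb = Suc g" unfolding Vb_def using sa by simp
        thus ?thesis using A \<open>card (set aP) \<le> card Va\<close> sa by simp
      next
        case False
        hence "card Vb \<le> card Eb" by (rule cyB)
        thus ?thesis using A by linarith
      qed
    qed
  qed
  have "Inv Va Vb Ea Eb" unfolding Inv_def
  proof (intro conjI)
    show "finite Va" "finite Vb" unfolding Va_def Vb_def by auto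
    show "Va \<subseteq> V1" unfolding Va_def aP_def aQ_def using PW by auto
    show "Vb \<subseteq> V2" unfolding Vb_def bP_def bQ_def using PW by auto
    show "fst r \<in> Va" unfolding Va_def using lasts(1) nne by (metis UnI1 last_in_set)
    show "snd r \<in> Vb" unfolding Vb_def using lasts(3) nne by (metis UnI1 last_in_set)
    show "Ea \<subseteq> edges_of Va" unfolding Ea_def Va_def
      using pe_edges[OF Pp(4)] pe_edges[OF Qp(4)] edges_of_mono[of "set aP" "set aP \<union> set aQ"]
        edges_of_mono[of "set aQ" "set aP \<union> set aQ"] by blast
    show "Eb \<subseteq> edges_of Vb" unfolding Eb_def Vb_def
      using pe_edges[OF Pp(5)] pe_edges[OF Qp(5)] edges_of_mono[of "set bP" "set bP \<union> set bQ"]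
        edges_of_mono[of "set bQ" "set bP \<union> set bQ"] by blast
    show "col ` Ea = col ` Eb" unfolding Ea_def Eb_def image_Un aP_def bP_def aQ_def bQ_def
      using colpe[OF PQ(1)] colpe[OF PQ(2)] by simp
  qed (rule ineq)
  moreover have "card Va + card Vb \<le> k" using cVa cVb g4 by simp
  ultimately show False by (rule final)
qed

end

lemma card_filter_sum: "finite A \<Longrightarrow> card {x\<in>A. P x} = (\<Sum>x\<in>A. if P x then 1 else 0)"
  by (subst card_eq_sum) (rule sum.inter_filter)

lemma prune:
  fixes R :: "'a \<Rightarrow> 'a \<Rightarrow> bool" and \<delta> :: nat
  assumes fin: "finite W" and sym: "\<And>x y. R x y \<Longrightarrow> R y x" and irr: "\<And>x. \<not> R x x"
    and big: "2 * \<delta> * card W < (\<Sum>p\<in>W. card {q\<in>W. R p q})"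
  shows "\<exists>W'\<subseteq>W. W' \<noteq> {} \<and> (\<forall>p\<in>W'. \<delta> < card {q\<in>W'. R p q})"
  using fin big
proof (induction W rule: finite_psubset_induct)
  case (psubset W)
  show ?case
  proof (cases "\<forall>p\<in>W. \<delta> < card {q\<in>W. R p q}")
    case True
    have "W \<noteq> {}" using psubset.prems by (cases "W = {}") auto
    thus ?thesis using True by blast
  next
    case False
    then obtain p where p: "p \<in> W" "card {q\<in>W. R p q} \<le> \<delta>" by (auto simp: not_less)
    let ?W = "W - {p}"
    have fW: "finite ?W" using psubset.hyps by simp
    have each: "card {x\<in>W. R q x} = card {x\<in>?W. R q x} + (if R q p then 1 else 0)" if q: "q \<in> ?W" for q
    proof (cases "R q p")
      case True
      have "{x\<in>W. R q x} = insert p {x\<in>?W. R q x}" using True p by auto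
      thus ?thesis using True fW by simp
    next
      case False
      have "{x\<in>W. R q x} = {x\<in>?W. R q x}" using False by auto
      thus ?thesis using False by simp
    qed
    have s1: "(\<Sum>q\<in>W. card {x\<in>W. R q x}) = card {x\<in>W. R p x} + (\<Sum>q\<in>?W. card {x\<in>W. R q x})"
      using psubset.hyps p by (simp add: sum.remove)
    have s2: "(\<Sum>q\<in>?W. card {x\<in>W. R q x}) = (\<Sum>q\<in>?W. card {x\<in>?W. R q x}) + (\<Sum>q\<in>?W. (if R q p then 1 else 0))"
      using each by (simp add: sum.distrib)
    have "(\<Sum>q\<in>?W. (if R q p then 1 else 0)) = card {q\<in>?W. R q p}"
      using card_filter_sum[OF fW, of "\<lambda>q. R q p"] by simp
    also have "{q\<in>?W. R q p} = {q\<in>W. R p q}"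
    proof (intro set_eqI iffI)
      fix q assume "q \<in> {q\<in>?W. R q p}"
      hence "q \<in> W" "R q p" by auto
      hence "R p q" using sym by blast
      thus "q \<in> {q\<in>W. R p q}" using \<open>q \<in> W\<close> by simp
    next
      fix q assume a: "q \<in> {q\<in>W. R p q}"
      hence b: "q \<in> W" "R p q" by auto
      hence "R q p" using sym by blast
      moreover have "q \<noteq> p" using b(2) irr by metis
      ultimately show "q \<in> {q\<in>?W. R q p}" using b(1) by simp
    qed
    finally have s3: "(\<Sum>q\<in>?W. (if R q p then 1 else 0)) = card {q\<in>W. R p q}" .
    have "0 < card W" using p psubset.hyps card_gt_0_iff by blast
    hence cW: "card ?W + 1 = card W" using p psubset.hyps by (simp add: card_Diff_singleton_if)
    have lt: "2 * \<delta> * card ?W < (\<Sum>q\<in>?W. card {x\<in>?W. R q x})"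
    proof -
      have "2 * \<delta> * card ?W + 2 * \<delta> = 2 * \<delta> * card W" using cW by (metis add_mult_distrib2 mult_1_right)
      also have "\<dots> < (\<Sum>q\<in>W. card {x\<in>W. R q x})" using psubset.prems by simp
      also have "\<dots> = (\<Sum>q\<in>?W. card {x\<in>?W. R q x}) + 2 * card {q\<in>W. R p q}"
        using s1 s2 s3 by simp
      finally show ?thesis using p by linarith
    qed
    have sub: "?W \<subset> W" using p by auto
    from psubset.IH[OF sub lt] obtain W' where "W' \<subseteq> ?W" "W' \<noteq> {}" "\<forall>p\<in>W'. \<delta> < card {q\<in>W'. R p q}"
      by blast
    thus ?thesis by blast
  qed
qed

definition sel :: "'a set \<Rightarrow> 'a \<times> 'a \<times> 'a \<times> 'a \<Rightarrow> bool" where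
  "sel X = (\<lambda>(a,c,b,d). a \<in> X \<and> c \<in> X \<and> b \<notin> X \<and> d \<notin> X)"

lemma count_X:
  assumes V: "finite V" and q: "a \<in> V" "c \<in> V" "b \<in> V" "d \<in> V" "distinct [a,c,b,d]"
  shows "card {X\<in>Pow V. sel X (a,c,b,d)} = 2 ^ (card V - 4)"
proof -
  have "bij_betw (\<lambda>Y. Y \<union> {a,c}) (Pow (V - {a,c,b,d})) {X\<in>Pow V. sel X (a,c,b,d)}"
  proof (rule bij_betw_byWitness[where f' = "\<lambda>X. X - {a,c}"])
    show "\<forall>Y\<in>Pow (V - {a,c,b,d}). Y \<union> {a,c} - {a,c} = Y" by auto
    show "\<forall>X\<in>{X\<in>Pow V. sel X (a,c,b,d)}. X - {a,c} \<union> {a,c} = X" by (auto simp: sel_def)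
    show "(\<lambda>Y. Y \<union> {a,c}) ` Pow (V - {a,c,b,d}) \<subseteq> {X\<in>Pow V. sel X (a,c,b,d)}"
      using q by (auto simp: sel_def)
    show "(\<lambda>X. X - {a,c}) ` {X\<in>Pow V. sel X (a,c,b,d)} \<subseteq> Pow (V - {a,c,b,d})"
      by (auto simp: sel_def)
  qed
  hence "card {X\<in>Pow V. sel X (a,c,b,d)} = card (Pow (V - {a,c,b,d}))" by (simp add: bij_betw_same_card)
  also have "\<dots> = 2 ^ card (V - {a,c,b,d})" using V by (simp add: card_Pow)
  also have "card (V - {a,c,b,d}) = card V - 4"
  proof -
    have "card {a,c,b,d} = 4" using q by simp
    thus ?thesis using q V by (subst card_Diff_subset) auto
  qed
  finally show ?thesis .
qed

lemma averaging:
  fixes V :: "'a set" and Q :: "('a \<times> 'a \<times> 'a \<times> 'a) set"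
  assumes V: "finite V" and Q: "\<And>a c b d. (a,c,b,d) \<in> Q \<Longrightarrow> a\<in>V \<and> c\<in>V \<and> b\<in>V \<and> d\<in>V \<and> distinct [a,c,b,d]"
  shows "\<exists>X\<subseteq>V. card Q \<le> 16 * card {q\<in>Q. sel X q}"
proof (cases "Q = {}")
  case True thus ?thesis by auto
next
  case False
  then obtain q1 where "q1 \<in> Q" by blast
  then obtain a c b d where q0: "(a,c,b,d) \<in> Q" by (cases q1) blast
  hence "card {a,c,b,d} = 4" "{a,c,b,d} \<subseteq> V" using Q[OF q0] by auto
  hence V4: "4 \<le> card V" using card_mono[OF V] by metis
  have QV: "Q \<subseteq> V \<times> V \<times> V \<times> V" using Q by auto
  have fQ: "finite Q" using finite_subset[OF QV] V by auto
  have cnt: "card {X\<in>Pow V. sel X q} = 2 ^ (card V - 4)" if "q \<in> Q" for q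
    using that Q count_X[OF V] by (cases q) auto
  have "(\<Sum>X\<in>Pow V. card {q\<in>Q. sel X q}) = (\<Sum>X\<in>Pow V. \<Sum>q\<in>Q. if sel X q then 1 else 0)"
    using card_filter_sum[OF fQ] by presburger
  also have "\<dots> = (\<Sum>q\<in>Q. \<Sum>X\<in>Pow V. if sel X q then 1 else 0)" by (rule sum.swap)
  also have "\<dots> = (\<Sum>q\<in>Q. card {X\<in>Pow V. sel X q})"
    using card_filter_sum[of "Pow V"] V by simp
  also have "\<dots> = (\<Sum>q\<in>Q. 2 ^ (card V - 4))" using cnt by simp
  finally have S: "(\<Sum>X\<in>Pow V. card {q\<in>Q. sel X q}) = card Q * 2 ^ (card V - 4)" by simp
  show ?thesis
  proof (rule ccontr)
    assume "\<not> ?thesis"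
    hence lt: "\<forall>X\<in>Pow V. 16 * card {q\<in>Q. sel X q} < card Q" by auto
    have "(\<Sum>X\<in>Pow V. 16 * card {q\<in>Q. sel X q}) < (\<Sum>X\<in>Pow V. card Q)"
      using V lt by (intro sum_strict_mono) auto
    also have "\<dots> = 2 ^ card V * card Q" using V by (simp add: card_Pow)
    also have "2 ^ card V = (16::nat) * 2 ^ (card V - 4)"
    proof -
      define t where "t = card V - 4"
      have e: "card V = t + 4" using V4 unfolding t_def by simp
      have "(2::nat) ^ card V = 16 * 2 ^ t" unfolding e by (simp add: power_add)
      thus ?thesis unfolding t_def .
    qed
    finally have "16 * (\<Sum>X\<in>Pow V. card {q\<in>Q. sel X q}) < 16 * 2 ^ (card V - 4) * card Q"
      by (simp add: sum_distrib_left)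
    thus False using S by (simp add: algebra_simps)
  qed
qed

context setting begin

definition Pairs where "Pairs = {(a,c). a \<in> V' \<and> c \<in> V' \<and> a \<noteq> c}"
definition colp where "colp p = col {fst p, snd p}"
definition Rr where "Rr = {(p,q). p \<in> Pairs \<and> q \<in> Pairs \<and> colp p = colp q}"
definition Q4 where "Q4 = {(a,c,b,d). a \<in> V' \<and> c \<in> V' \<and> b \<in> V' \<and> d \<in> V' \<and> distinct [a,c,b,d] \<and> col {a,c} = col {b,d}}"

lemma Pairs_Sigma: "Pairs = Sigma V' (\<lambda>a. V' - {a})"
  unfolding Pairs_def by auto

lemma finite_Pairs: "finite Pairs"
  unfolding Pairs_Sigma using finite_V' by auto

lemma card_Pairs: "card Pairs = card V' * (card V' - 1)"
proof -
  have "card Pairs = (\<Sum>a\<in>V'. card (V' - {a}))"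
    unfolding Pairs_Sigma using finite_V' by (subst card_SigmaI) auto
  also have "\<dots> = (\<Sum>a\<in>V'. card V' - 1)" using finite_V' by (intro sum.cong) auto
  finally show ?thesis by simp
qed

lemma Rr_Sigma: "Rr = Sigma Pairs (\<lambda>p. {q\<in>Pairs. colp q = colp p})"
  unfolding Rr_def by auto

lemma CS: "card Pairs ^ 2 \<le> card Rr * card (colp ` Pairs)"
proof -
  let ?G = "colp ` Pairs"
  let ?M = "\<lambda>\<gamma>. {q\<in>Pairs. colp q = \<gamma>}"
  have "card Rr = (\<Sum>p\<in>Pairs. card (?M (colp p)))"
    unfolding Rr_Sigma using finite_Pairs by (subst card_SigmaI) auto
  also have "\<dots> = (\<Sum>\<gamma>\<in>?G. \<Sum>p\<in>{p. p \<in> Pairs \<and> colp p = \<gamma>}. card (?M (colp p)))"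
    by (rule sum.image_gen[OF finite_Pairs])
  also have "\<dots> = (\<Sum>\<gamma>\<in>?G. card (?M \<gamma>) * card (?M \<gamma>))"
  proof (intro sum.cong refl)
    fix \<gamma> assume "\<gamma> \<in> ?G"
    have "(\<Sum>p\<in>{p. p \<in> Pairs \<and> colp p = \<gamma>}. card (?M (colp p))) = (\<Sum>p\<in>{p. p \<in> Pairs \<and> colp p = \<gamma>}. card (?M \<gamma>))"
      by (intro sum.cong) auto
    also have "\<dots> = card (?M \<gamma>) * card (?M \<gamma>)" by simp
    finally show "(\<Sum>p\<in>{p. p \<in> Pairs \<and> colp p = \<gamma>}. card (?M (colp p))) = card (?M \<gamma>) * card (?M \<gamma>)" .
  qed
  finally have A: "card Rr = (\<Sum>\<gamma>\<in>?G. card (?M \<gamma>) * card (?M \<gamma>))" .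
  have "card Pairs = (\<Sum>p\<in>Pairs. 1)" by simp
  also have "\<dots> = (\<Sum>\<gamma>\<in>?G. \<Sum>p\<in>{p. p \<in> Pairs \<and> colp p = \<gamma>}. 1)"
    by (rule sum.image_gen[OF finite_Pairs])
  also have "\<dots> = (\<Sum>\<gamma>\<in>?G. card (?M \<gamma>))" by simp
  finally have B: "card Pairs = (\<Sum>\<gamma>\<in>?G. card (?M \<gamma>))" .
  have "(\<Sum>\<gamma>\<in>?G. real (card (?M \<gamma>)))\<^sup>2 \<le> (\<Sum>\<gamma>\<in>?G. (real (card (?M \<gamma>)))\<^sup>2) * card ?G"
    by (rule sum_squared_le_sum_of_squares)
  hence "real (card Pairs ^ 2) \<le> real (card Rr * card ?G)"
    unfolding A B by (simp add: power2_eq_square)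
  thus ?thesis by (simp only: of_nat_le_iff)
qed

definition Zs where
  "Zs p = ({fst p} \<times> cls (fst p) (colp p)) \<union> ({snd p} \<times> cls (snd p) (colp p))
        \<union> (cls (fst p) (colp p) \<times> {fst p}) \<union> (cls (snd p) (colp p) \<times> {snd p})"

lemma card_Zs: assumes p: "p \<in> Pairs" shows "card (Zs p) \<le> 4 * k"
proof -
  have a: "fst p \<in> V'" "snd p \<in> V'" using p by (auto simp: Pairs_def)
  have c1: "card (cls (fst p) (colp p)) \<le> k" "card (cls (snd p) (colp p)) \<le> k"
    using cls_small[OF a(1)] cls_small[OF a(2)] by (auto intro: less_imp_le)
  have "card (Zs p) \<le> card ({fst p} \<times> cls (fst p) (colp p)) + card ({snd p} \<times> cls (snd p) (colp p))
        + card (cls (fst p) (colp p) \<times> {fst p}) + card (cls (snd p) (colp p) \<times> {snd p})"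
    unfolding Zs_def by (meson card_Un_le add_le_mono1 order_trans)
  also have "\<dots> \<le> 4 * k" using c1 by (simp add: card_cartesian_product)
  finally show ?thesis .
qed

lemma Rr_bound: "card Rr \<le> card Q4 + 4 * k * card Pairs"
proof -
  let ?h = "\<lambda>(a::nat,c::nat,b::nat,d::nat). ((a,c),(b,d))"
  have sub: "Rr \<subseteq> ?h ` Q4 \<union> Sigma Pairs Zs"
  proof
    fix x assume x: "x \<in> Rr"
    obtain a c b d where xe: "x = ((a,c),(b,d))" by (metis prod.exhaust)
    have ac: "a \<in> V'" "c \<in> V'" "b \<in> V'" "d \<in> V'" "a \<noteq> c" "b \<noteq> d" "col {a,c} = col {b,d}"
      using x unfolding xe Rr_def Pairs_def colp_def by auto
    have lt: "a < n" "b < n" "c < n" "d < n" using ac V'_sub by auto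
    have acP: "(a,c) \<in> Pairs" using ac unfolding Pairs_def by simp
    show "x \<in> ?h ` Q4 \<union> Sigma Pairs Zs"
    proof (cases "distinct [a,c,b,d]")
      case True
      hence "(a,c,b,d) \<in> Q4" using ac unfolding Q4_def by simp
      hence "?h (a,c,b,d) \<in> ?h ` Q4" by (rule imageI)
      thus ?thesis unfolding xe by simp
    next
      case False
      hence cases: "b = a \<or> b = c \<or> d = a \<or> d = c" using ac by auto
      have "(b,d) \<in> Zs (a,c)"
      proof -
        have g: "colp (a,c) = col {a,c}" by (simp add: colp_def)
        { assume "b = a"
          hence "d \<in> cls a (col {a,c})" using ac lt unfolding cls_def by auto
          hence ?thesis using \<open>b = a\<close> g unfolding Zs_def by simp }
        moreover
        { assume "b = c"
          hence "d \<in> cls c (col {a,c})" using ac lt unfolding cls_def by auto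
          hence ?thesis using \<open>b = c\<close> g unfolding Zs_def by simp }
        moreover
        { assume "d = a"
          hence "col {a,b} = col {a,c}" using ac by (simp add: insert_commute)
          hence "b \<in> cls a (col {a,c})" using ac lt \<open>d = a\<close> unfolding cls_def by auto
          hence ?thesis using \<open>d = a\<close> g unfolding Zs_def by simp }
        moreover
        { assume "d = c"
          hence "col {c,b} = col {a,c}" using ac by (simp add: insert_commute)
          hence "b \<in> cls c (col {a,c})" using ac lt \<open>d = c\<close> unfolding cls_def by auto
          hence ?thesis using \<open>d = c\<close> g unfolding Zs_def by simp }
        ultimately show ?thesis using cases by blast
      qed
      thus ?thesis unfolding xe using acP by simp
    qed
  qed
  have fQ4: "finite Q4"
    by (rule finite_subset[of _ "V' \<times> V' \<times> V' \<times> V'"]) (auto simp: Q4_def finite_V')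
  have fZ: "finite (Zs p)" for p unfolding Zs_def by (simp add: finite_cls)
  have fS: "finite (Sigma Pairs Zs)" using finite_Pairs fZ by simp
  have "card Rr \<le> card (?h ` Q4 \<union> Sigma Pairs Zs)"
    using fQ4 fS by (intro card_mono[OF _ sub]) auto
  also have "\<dots> \<le> card (?h ` Q4) + card (Sigma Pairs Zs)" by (rule card_Un_le)
  also have "card (?h ` Q4) \<le> card Q4" using fQ4 by (rule card_image_le)
  also have "card (Sigma Pairs Zs) = (\<Sum>p\<in>Pairs. card (Zs p))" using finite_Pairs fZ by simp
  also have "\<dots> \<le> (\<Sum>p\<in>Pairs. 4 * k)" by (intro sum_mono card_Zs)
  finally show ?thesis by (simp add: ac_simps)
qed

lemma main_ineq:
  assumes m: "n^2 < m ^ (k div 4)"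
  shows "card Pairs ^ 2 \<le> (32 * (m + k*k) * n^2 + 4 * k * n^2) * card (col ` edges_of {..<n})"
proof -
  have Qp: "a\<in>V' \<and> c\<in>V' \<and> b\<in>V' \<and> d\<in>V' \<and> distinct [a,c,b,d]" if "(a,c,b,d) \<in> Q4" for a c b d
    using that unfolding Q4_def by simp
  obtain X where X: "X \<subseteq> V'" "card Q4 \<le> 16 * card {q\<in>Q4. sel X q}"
    using averaging[OF finite_V' Qp] by blast
  define W0 where "W0 = X \<times> (V' - X)"
  have fW0: "finite W0" unfolding W0_def using X finite_V' finite_subset by blast
  have cV': "card V' \<le> n" using card_mono[OF _ V'_sub] by simp
  have cW0: "card W0 \<le> n^2"
  proof -
    have "W0 \<subseteq> V' \<times> V'" unfolding W0_def using X by auto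
    hence "card W0 \<le> card (V' \<times> V')" using finite_V' by (intro card_mono) auto
    also have "\<dots> = card V' * card V'" by (simp add: card_cartesian_product)
    also have "\<dots> \<le> n * n" using cV' by (intro mult_le_mono) auto
    finally show ?thesis by (simp add: power2_eq_square)
  qed
  have Phi: "card {q\<in>Q4. sel X q} = (\<Sum>p\<in>W0. card {q\<in>W0. adj p q})"
  proof -
    let ?h = "\<lambda>((a::nat,b::nat),(c::nat,d::nat)). (a,c,b,d)"
    have fin: "\<forall>p\<in>W0. finite {q\<in>W0. adj p q}" using fW0 by auto
    have "(\<Sum>p\<in>W0. card {q\<in>W0. adj p q}) = card (Sigma W0 (\<lambda>p. {q\<in>W0. adj p q}))"
      using fW0 fin by simp
    also have "\<dots> = card (?h ` Sigma W0 (\<lambda>p. {q\<in>W0. adj p q}))"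
      by (rule card_image[symmetric]) (auto simp: inj_on_def)
    also have "?h ` Sigma W0 (\<lambda>p. {q\<in>W0. adj p q}) = {q\<in>Q4. sel X q}"
    proof
      show "?h ` Sigma W0 (\<lambda>p. {q\<in>W0. adj p q}) \<subseteq> {q\<in>Q4. sel X q}"
      proof
        fix z assume "z \<in> ?h ` Sigma W0 (\<lambda>p. {q\<in>W0. adj p q})"
        then obtain a b c d where z: "z = (a,c,b,d)" "(a,b) \<in> W0" "(c,d) \<in> W0" "adj (a,b) (c,d)"
          by auto
        have "a \<in> X" "c \<in> X" "b \<in> V' - X" "d \<in> V' - X" "a \<noteq> c" "b \<noteq> d" "col {a,c} = col {b,d}"
          using z unfolding W0_def adj_def by auto
        moreover hence "a \<in> V'" "c \<in> V'" using X by auto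
        ultimately show "z \<in> {q\<in>Q4. sel X q}" unfolding z Q4_def sel_def by auto
      qed
    next
      show "{q\<in>Q4. sel X q} \<subseteq> ?h ` Sigma W0 (\<lambda>p. {q\<in>W0. adj p q})"
      proof
        fix z assume zq: "z \<in> {q\<in>Q4. sel X q}"
        obtain a c b d where ze: "z = (a,c,b,d)" by (metis prod.exhaust)
        have h: "a \<in> X" "c \<in> X" "b \<in> V' - X" "d \<in> V' - X" "a \<noteq> c" "b \<noteq> d" "col {a,c} = col {b,d}"
          using zq unfolding ze Q4_def sel_def by auto
        hence "((a,b),(c,d)) \<in> Sigma W0 (\<lambda>p. {q\<in>W0. adj p q})" unfolding W0_def adj_def by auto
        moreover have "z = ?h ((a,b),(c,d))" using ze by simp
        ultimately show "z \<in> ?h ` Sigma W0 (\<lambda>p. {q\<in>W0. adj p q})" by (rule rev_image_eqI)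
      qed
    qed
    finally show ?thesis by simp
  qed
  have deg: "(\<Sum>p\<in>W0. card {q\<in>W0. adj p q}) \<le> 2 * (m + k*k) * card W0"
  proof (rule ccontr)
    assume "\<not> ?thesis"
    hence lt: "2 * (m + k*k) * card W0 < (\<Sum>p\<in>W0. card {q\<in>W0. adj p q})" by simp
    have s: "\<And>x y. adj x y \<Longrightarrow> adj y x" by (rule adj_sym)
    have i: "\<And>x. \<not> adj x x" by (rule adj_irrefl)
    from prune[OF fW0 s i lt] obtain W' where
      W': "W' \<subseteq> W0" "W' \<noteq> {}" "\<forall>p\<in>W'. m + k*k < card {q\<in>W'. adj p q}" by blast
    then obtain r where r: "r \<in> W'" by blast
    have "card W' \<le> card W0" using card_mono[OF fW0 W'(1)] .
    hence bigW: "card W' < m ^ (k div 4)" using cW0 m by linarith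
    have "core n k col X (V' - X) W' r m"
      unfolding core_def core_axioms_def
    proof (intro conjI)
      show "setting n k col" by (rule setting_axioms)
      show "X \<subseteq> V'" by (rule X(1))
      show "V' - X \<subseteq> V'" by blast
      show "X \<inter> (V' - X) = {}" by blast
      show "W' \<subseteq> X \<times> (V' - X)" using W'(1) unfolding W0_def .
      show "r \<in> W'" by (rule r)
      show "\<forall>p\<in>W'. m + k*k < card {q\<in>W'. adj p q}" by (rule W'(3))
      show "card W' < m ^ (k div 4)" by (rule bigW)
    qed
    thus False by (rule core.core_false)
  qed
  have colsub: "colp ` Pairs \<subseteq> col ` edges_of {..<n}"
  proof
    fix x assume "x \<in> colp ` Pairs"
    then obtain a c where "(a,c) \<in> Pairs" "x = col {a,c}" unfolding colp_def by auto
    hence "{a,c} \<in> edges_of {..<n}" "x = col {a,c}" using V'_sub unfolding Pairs_def by (auto intro!: edge_in)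
    thus "x \<in> col ` edges_of {..<n}" by blast
  qed
  have cG: "card (colp ` Pairs) \<le> card (col ` edges_of {..<n})"
    by (intro card_mono[OF _ colsub] finite_imageI finite_edges_of) simp
  have cP: "card Pairs \<le> n^2"
  proof -
    have "card Pairs \<le> card V' * card V'" unfolding card_Pairs by simp
    also have "\<dots> \<le> n * n" using cV' by (intro mult_le_mono) auto
    finally show ?thesis by (simp add: power2_eq_square)
  qed
  have "card Rr \<le> card Q4 + 4 * k * card Pairs" by (rule Rr_bound)
  also have "card Q4 \<le> 16 * (2 * (m + k*k) * card W0)" using X(2) Phi deg by linarith
  also have "16 * (2 * (m + k*k) * card W0) \<le> 32 * (m + k*k) * n^2"
  proof -
    have "16 * (2 * (m + k*k) * card W0) = 32 * (m + k*k) * card W0" by simp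
    also have "\<dots> \<le> 32 * (m + k*k) * n^2" using cW0 by (rule mult_le_mono2)
    finally show ?thesis .
  qed
  also have "4 * k * card Pairs \<le> 4 * k * n^2" using cP by simp
  finally have RB: "card Rr \<le> 32 * (m + k*k) * n^2 + 4 * k * n^2" by simp
  have "card Pairs ^ 2 \<le> card Rr * card (colp ` Pairs)" by (rule CS)
  also have "\<dots> \<le> (32 * (m + k*k) * n^2 + 4 * k * n^2) * card (col ` edges_of {..<n})"
    using RB cG by (rule mult_le_mono)
  finally show ?thesis .
qed

end

lemma exists_good:
  assumes k2: "2 \<le> k" shows "\<exists>col. good_colouring n k ((k choose 2) - k div 2 + 1) col"
proof (intro exI[of _ set_encode])
  show "good_colouring n k ((k choose 2) - k div 2 + 1) set_encode"
    unfolding good_colouring_def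
  proof (intro allI impI)
    fix S assume S: "S \<subseteq> {..<n} \<and> card S = k"
    hence fS: "finite S" using k2 card_ge_0_finite by force
    have inj: "inj_on set_encode (edges_of S)"
      by (rule inj_on_subset[OF inj_on_set_encode]) (auto dest: edge_finite)
    have "card (set_encode ` edges_of S) = k choose 2"
      using card_image[OF inj] card_edges_of[OF fS] S by simp
    moreover have "1 \<le> k choose 2" using k2 by (simp add: Suc_leI zero_less_binomial)
    moreover have "1 \<le> k div 2" using k2 by simp
    ultimately show "(k choose 2) - k div 2 + 1 \<le> card (set_encode ` edges_of S)" by linarith
  qed
qed

lemma f_good:
  assumes "2 \<le> k"
  shows "\<exists>col. good_colouring n k ((k choose 2) - k div 2 + 1) col \<and>
     card (col ` edges_of {..<n}) = f n k ((k choose 2) - k div 2 + 1)"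
  unfolding f_def by (rule LeastI_ex) (use exists_good[OF assms] in blast)

lemma f_nat_bound:
  assumes k8: "8 \<le> k" and k4: "4 dvd k" and kn: "k \<le> n" and m: "n^2 < m ^ (k div 4)"
  shows "((n-k)*(n-k-1))^2 \<le> (32*(m+k*k)*n^2 + 4*k*n^2) * f n k ((k choose 2) - k div 2 + 1)"
proof -
  obtain col where col: "good_colouring n k ((k choose 2) - k div 2 + 1) col"
      "card (col ` edges_of {..<n}) = f n k ((k choose 2) - k div 2 + 1)"
    using f_good[of k n] k8 by auto
  interpret setting n k col by unfold_locales (use k8 k4 kn col in auto)
  have "(n-k)*(n-k-1) \<le> card V' * (card V' - 1)"
    using card_V' by (intro mult_le_mono diff_le_mono) auto
  hence "((n-k)*(n-k-1))^2 \<le> card Pairs ^ 2" unfolding card_Pairs by (rule power_mono) simp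
  also have "\<dots> \<le> (32*(m+k*k)*n^2 + 4*k*n^2) * card (col ` edges_of {..<n})" by (rule main_ineq[OF m])
  finally show ?thesis using col(2) by simp
qed

theorem theorem1p2:
  fixes k :: nat
  assumes "k \<ge> 8" and "4 dvd k"
  shows "(\<lambda>n. real (f n k ((k choose 2) - k div 2 + 1)))
           \<in> \<Omega>(\<lambda>n. real n powr (2 - 8 / real k))"
proof -
  define g where "g = k div 4"
  have kg: "k = 4 * g" using assms(2) unfolding g_def by (auto elim!: dvdE)
  have g0: "0 < g" using assms(1) kg by simp
  define K :: real where "K = 64 + 32 * real k ^ 2 + 4 * real k"
  have K0: "0 < K" unfolding K_def by (simp add: add_pos_nonneg)
  show ?thesis
  proof (rule landau_omega.bigI[of "1 / (16 * K)"])
    show "0 < 1 / (16 * K)" using K0 by simp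
    show "eventually (\<lambda>n. norm (real (f n k ((k choose 2) - k div 2 + 1)))
            \<ge> 1 / (16 * K) * norm (real n powr (2 - 8 / real k))) at_top"
      using eventually_ge_at_top[of "4 * k"]
    proof (rule eventually_mono)
      fix n assume n: "4 * k \<le> n"
      define F where "F = real (f n k ((k choose 2) - k div 2 + 1))"
      define x where "x = real n powr (8 / real k)"
      define m where "m = nat \<lfloor>x\<rfloor> + 1"
      have npos: "0 < real n" using n assms(1) by simp
      have x1: "1 \<le> x" unfolding x_def using npos n assms(1)
        by (intro ge_one_powr_ge_zero) auto
      have xm: "x < real m" "real m \<le> x + 1" unfolding m_def using x1 by linarith+
      have "x ^ g = real n powr (real g * (8 / real k))" unfolding x_def
        using npos by (simp add: powr_power)
      also have "real g * (8 / real k) = 2" using kg g0 by (simp add: field_simps)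
      also have "real n powr 2 = real n ^ 2" using npos by (simp add: powr_numeral)
      finally have xg: "x ^ g = real n ^ 2" .
      have "real n ^ 2 < real m ^ g" unfolding xg[symmetric]
        using x1 xm g0 by (intro power_strict_mono) auto
      hence mg: "n ^ 2 < m ^ (k div 4)" unfolding g_def[symmetric] by (simp only: of_nat_power[symmetric] of_nat_less_iff)
      have kn: "k \<le> n" using n by simp
      have B: "real (((n-k)*(n-k-1))^2) \<le> real ((32*(m+k*k)*n^2 + 4*k*n^2) * f n k ((k choose 2) - k div 2 + 1))"
        using f_nat_bound[OF assms(1,2) kn mg] by (simp only: of_nat_le_iff)
      have r1: "real (n - k) \<ge> real n / 2" using n by (simp add: of_nat_diff)
      have r2: "real (n - k - 1) \<ge> real n / 2" using n assms(1) by (simp add: of_nat_diff)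
      have "real n / 2 * (real n / 2) \<le> real (n-k) * real (n-k-1)"
        using r1 r2 npos by (intro mult_mono) auto
      hence "(real n / 2 * (real n / 2)) ^ 2 \<le> (real (n-k) * real (n-k-1)) ^ 2"
        using npos by (intro power_mono) auto
      moreover have p4: "real n ^ 4 = real n * (real n * (real n * real n))" by (simp add: numeral_eq_Suc)
      ultimately have L: "real n ^ 4 / 16 \<le> real (((n-k)*(n-k-1))^2)" by (simp add: power2_eq_square field_simps)
      have F0: "0 \<le> F" unfolding F_def by simp
      have "real ((32*(m+k*k)*n^2 + 4*k*n^2) * f n k ((k choose 2) - k div 2 + 1))
            = (32 * (real m + real k ^ 2) + 4 * real k) * real n ^ 2 * F"
        unfolding F_def by (simp add: algebra_simps power2_eq_square)
      also have "\<dots> \<le> (K * x) * real n ^ 2 * F"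
      proof -
        have "32 * (real m + real k ^ 2) + 4 * real k \<le> 32 * x + (32 + 32 * real k ^ 2 + 4 * real k)"
          using xm by simp
        also have "(32 + 32 * real k ^ 2 + 4 * real k) \<le> (32 + 32 * real k ^ 2 + 4 * real k) * x"
        proof -
          have c0: "0 \<le> 32 + 32 * real k ^ 2 + 4 * real k" by simp
          show ?thesis using mult_left_mono[OF x1 c0] by simp
        qed
        finally have "32 * (real m + real k ^ 2) + 4 * real k \<le> K * x" unfolding K_def by (simp add: algebra_simps)
        thus ?thesis using F0 by (intro mult_right_mono) auto
      qed
      finally have H: "real n ^ 4 / 16 \<le> (K * x * real n ^ 2) * F" using L B by simp
      have pos: "0 < K * x * real n ^ 2" using K0 x1 npos by simp
      have "real n powr (2 - 8 / real k) = real n ^ 2 / x" unfolding x_def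
        using npos by (simp add: powr_diff powr_numeral)
      hence "1 / (16 * K) * norm (real n powr (2 - 8 / real k)) = (real n ^ 4 / 16) / (K * x * real n ^ 2)"
        using npos K0 x1 by (simp add: field_simps power2_eq_square) (simp add: power_def)
      also have "\<dots> \<le> F" using H pos by (simp add: divide_le_eq mult.commute)
      finally show "1 / (16 * K) * norm (real n powr (2 - 8 / real k)) \<le> norm (real (f n k ((k choose 2) - k div 2 + 1)))"
        unfolding F_def by simp
    qed
  qed
qed

end
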